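(* Let $X$ be a sum of finitely many independent Bernoulli random variables, with distribution $P$ and mean $\lambda>0$. For $t\ge0$ let $X_t=X+Z_t$ where $Z_t\sim\mathrm{Po}(t)$ is independent of $X$, let $P_t(r)=\Pr(X_t=r)$ and $\widetilde P_t(r)=\frac{(r+1)\Pr(X_t=r+1)}{\lambda+t}$ for $r\in\mathbb{Z}_+$. Then $$D(P\,\|\,\mathrm{Po}(\lambda))=\int_0^\infty D(P_t\,\|\,\widetilde P_t)\,dt.$$
   Context: $\mathrm{Po}(\lambda)$ is the Poisson distribution with mean $\lambda$; $D(P\|Q)=\sum_x P(x)\log\frac{P(x)}{Q(x)}$ is relative entropy (natural logarithm, conventions $0\log(0/a)=0$, $a\log(a/0)=\infty$). Note $\widetilde P_t$ is a probability distribution on $\mathbb{Z}_+$ since $E(X_t)=\lambda+t$. *)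

theory Defs
  imports "HOL-Probability.Probability"
begin

text \<open>Poisson distribution Po(t) for t \<ge> 0; Po(0) is the point mass at 0
  (the library's poisson_pmf is only specified for positive rate).\<close>
definition Po :: "real \<Rightarrow> nat pmf" where
  "Po t = (if t = 0 then return_pmf 0 else poisson_pmf t)"

text \<open>The value lies in (-\<infinity>, \<infinity>]: for probability distributions the negative
  parts of the terms are always summable, so a non-summable series diverges to +\<infinity>.\<close>
definition rel_entropy :: "(nat \<Rightarrow> real) \<Rightarrow> (nat \<Rightarrow> real) \<Rightarrow> ereal" where
  "rel_entropy P Q =
     (if \<exists>x. P x > 0 \<and> Q x = 0 then \<infinity>
      else if (\<lambda>x. if P x = 0 then 0 else P x * ln (P x / Q x)) summable_on UNIV
      then ereal (\<Sum>\<^sub>\<infinity>x. if P x = 0 then 0 else P x * ln (P x / Q x))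
      else \<infinity>)"

definition bernoulli_sum_pmf :: "nat \<Rightarrow> (nat \<Rightarrow> real) \<Rightarrow> nat pmf" where
  "bernoulli_sum_pmf n p =
     map_pmf (\<lambda>b. \<Sum>i<n. of_bool (b i)) (Pi_pmf {..<n} False (\<lambda>i. bernoulli_pmf (p i)))"

definition add_poisson :: "nat pmf \<Rightarrow> real \<Rightarrow> nat pmf" where
  "add_poisson P t = map_pmf (\<lambda>(x, z). x + z) (pair_pmf P (Po t))"

end

theory Submission
  imports Defs
begin

definition w :: "real \<Rightarrow> nat \<Rightarrow> real" where
  "w t j = exp (-t) * t ^ j / fact j"

definition sh :: "nat \<Rightarrow> (nat \<Rightarrow> real) \<Rightarrow> nat \<Rightarrow> real" where
  "sh k f r = (if k \<le> r then f (r - k) else 0)"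

lemma pmf_Po: "0 \<le> t \<Longrightarrow> pmf (Po t) j = w t j"
  by (cases "t = 0") (auto simp: Po_def w_def indicator_def)

lemma bsum_support:
  assumes "k \<in> set_pmf (bernoulli_sum_pmf n p)" shows "k \<le> n"
proof -
  from assms obtain b where k: "k = (\<Sum>i<n. of_bool (b i))"
    by (auto simp: bernoulli_sum_pmf_def)
  have "(\<Sum>i<n. (of_bool (b i)::nat)) \<le> (\<Sum>i<n. 1)" by (intro sum_mono) auto
  then show ?thesis using k by simp
qed

lemma bsum_zero: "n < k \<Longrightarrow> pmf (bernoulli_sum_pmf n p) k = 0"
  using bsum_support by (meson leD pmf_eq_0_set_pmf)

lemma bsum_sum: "(\<Sum>k\<le>n. pmf (bernoulli_sum_pmf n p) k) = 1"
  by (rule sum_pmf_eq_1) (auto dest: bsum_support)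

lemma bsum_mean:
  assumes "\<And>i. i < n \<Longrightarrow> 0 \<le> p i \<and> p i \<le> 1"
  shows "(\<Sum>k\<le>n. real k * pmf (bernoulli_sum_pmf n p) k) = (\<Sum>i<n. p i)"
proof -
  let ?Q = "Pi_pmf {..<n} False (\<lambda>i. bernoulli_pmf (p i))"
  have "(\<Sum>k\<le>n. real k * pmf (bernoulli_sum_pmf n p) k) =
        measure_pmf.expectation (bernoulli_sum_pmf n p) real"
    by (subst integral_measure_pmf[of "{..n}"]) (auto dest: bsum_support simp: mult.commute)
  also have "\<dots> = measure_pmf.expectation ?Q (\<lambda>b. \<Sum>i<n. (of_bool (b i) :: real))"
    by (simp add: bernoulli_sum_pmf_def)
  also have "\<dots> = (\<Sum>i<n. measure_pmf.expectation ?Q (\<lambda>b. (of_bool (b i) :: real)))"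
    by (rule Bochner_Integration.integral_sum)
       (auto intro!: measure_pmf.integrable_const_bound[where B=1])
  also have "\<dots> = (\<Sum>i<n. p i)"
  proof (rule sum.cong[OF refl])
    fix i assume i: "i \<in> {..<n}"
    have "measure_pmf.expectation ?Q (\<lambda>b. (of_bool (b i) :: real)) =
          measure_pmf.expectation (map_pmf (\<lambda>b. b i) ?Q) (\<lambda>x. of_bool x)"
      by simp
    also have "map_pmf (\<lambda>b. b i) ?Q = bernoulli_pmf (p i)"
      using i by (subst Pi_pmf_component) auto
    finally show "measure_pmf.expectation ?Q (\<lambda>b. (of_bool (b i) :: real)) = p i"
      using assms[of i] i by simp
  qed
  finally show ?thesis .
qed

lemma pmf_add_poisson:
  assumes "0 \<le> t" "\<And>k. N < k \<Longrightarrow> pmf P k = 0"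
  shows "pmf (add_poisson P t) r = (\<Sum>k\<le>N. pmf P k * sh k (w t) r)"
proof -
  have eq: "add_poisson P t = bind_pmf P (\<lambda>x. map_pmf ((+) x) (Po t))"
    unfolding add_poisson_def pair_pmf_def map_bind_pmf
    by (simp add: map_bind_pmf map_pmf_def[symmetric] o_def)
  have pm: "pmf (map_pmf ((+) x) (Po t)) r = sh x (w t) r" for x
  proof (cases "x \<le> r")
    case True
    then have "r = x + (r - x)" by simp
    then have "pmf (map_pmf ((+) x) (Po t)) r = pmf (map_pmf ((+) x) (Po t)) (x + (r - x))" by simp
    also have "\<dots> = pmf (Po t) (r - x)" by (rule pmf_map_inj') (simp add: inj_on_def)
    finally show ?thesis using True assms by (simp add: sh_def pmf_Po)
  next
    case False
    then show ?thesis by (auto simp: sh_def pmf_eq_0_set_pmf)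
  qed
  have "pmf (add_poisson P t) r = measure_pmf.expectation P (\<lambda>x. sh x (w t) r)"
    by (simp add: eq pmf_bind pm)
  also have "\<dots> = (\<Sum>k\<le>N. pmf P k * sh k (w t) r)"
  proof (subst integral_measure_pmf[of "{..N}"])
    show "\<And>a. a \<in> set_pmf P \<Longrightarrow> sh a (w t) r \<noteq> 0 \<Longrightarrow> a \<in> {..N}"
      using assms(2) by (force simp: set_pmf_eq' not_le[symmetric])
  qed auto
  finally show ?thesis .
qed


lemma w_nonneg: "0 \<le> t \<Longrightarrow> 0 \<le> w t j"
  by (simp add: w_def)

lemma w_pos: "0 < t \<Longrightarrow> 0 < w t j"
  by (simp add: w_def)

lemma w_sums: "(\<lambda>j. w t j) sums 1"
proof -
  have "(\<lambda>j. t ^ j / fact j) sums exp t"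
    using exp_converges[of t] by (simp add: divide_inverse mult.commute)
  from sums_mult[OF this, of "exp (-t)"] show ?thesis
    by (simp add: w_def exp_minus field_simps)
qed

lemma w_Suc: "real (Suc j) * w t (Suc j) = t * w t j"
  by (simp add: w_def field_simps del: of_nat_Suc)

lemma w_sums1: "(\<lambda>j. real j * w t j) sums t"
proof -
  have "(\<lambda>j. t * w t j) sums t"
    using sums_mult[OF w_sums[of t], of t] by simp
  moreover have "(\<lambda>j. real (Suc j) * w t (Suc j)) = (\<lambda>j. t * w t j)"
    by (simp only: w_Suc)
  ultimately have "(\<lambda>j. real (Suc j) * w t (Suc j)) sums t" by simp
  then show ?thesis by (subst (asm) sums_Suc_iff) simp
qed

lemma sh_sums: "f sums s \<Longrightarrow> sh k f sums s"
proof -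
  assume f: "f sums s"
  have "(\<lambda>i. sh k f (i + k)) = f" by (simp add: sh_def fun_eq_iff)
  with f have "(\<lambda>i. sh k f (i + k)) sums s" by simp
  then show ?thesis by (subst (asm) sums_zero_iff_shift) (auto simp: sh_def)
qed

lemma summable_sh: "summable f \<Longrightarrow> summable (sh k f)"
  using sh_sums by (meson summable_def)

lemma sh_mult: "g r * sh k f r = sh k (\<lambda>j. g (j + k) * f j) r"
  by (simp add: sh_def)

definition wm :: "real \<Rightarrow> nat \<Rightarrow> real" where
  "wm t j = (case j of 0 \<Rightarrow> 0 | Suc i \<Rightarrow> w t i)"

lemma fact_Suc_div: "real (Suc i) * x / fact (Suc i) = x / (fact i :: real)"
proof -
  have "fact (Suc i) = real (Suc i) * (fact i :: real)" by (rule fact_Suc)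
  then show ?thesis by (simp del: of_nat_Suc)
qed

lemma w_deriv: "((\<lambda>t. w t j) has_real_derivative (wm t j - w t j)) (at t)"
proof (cases j)
  case 0
  show ?thesis unfolding w_def wm_def 0
    by (auto intro!: derivative_eq_intros)
next
  case (Suc i)
  have d: "((\<lambda>t. exp (-t) * t ^ Suc i) has_real_derivative (exp(-t) * (real (Suc i) * t^i) - exp(-t) * t^Suc i)) (at t)"
    apply (rule derivative_eq_intros refl)+
    apply (simp only: diff_Suc_Suc minus_nat.diff_0)
    apply (simp only: algebra_simps mult_1_left mult_1_right mult_minus1_right)
    done
  have "((\<lambda>t. exp (-t) * t ^ Suc i / fact (Suc i)) has_real_derivative
     (exp(-t) * (real (Suc i) * t^i) - exp(-t) * t^Suc i) / fact (Suc i)) (at t)"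
    by (rule DERIV_cdivide[OF d])
  also have "(exp(-t) * (real (Suc i) * t^i) - exp(-t) * t^Suc i) / fact (Suc i)
     = real (Suc i) * (exp(-t) * t^i) / fact (Suc i) - w t (Suc i)"
    unfolding w_def by (simp only: diff_divide_distrib mult.assoc mult.left_commute)
  also have "real (Suc i) * (exp(-t) * t^i) / fact (Suc i) = w t i"
    unfolding fact_Suc_div w_def by simp
  finally show ?thesis unfolding Suc by (simp add: w_def wm_def)
qed

lemma sh_wm: "sh k (wm t) r = (case r of 0 \<Rightarrow> 0 | Suc r' \<Rightarrow> sh k (w t) r')"
  by (cases r) (auto simp: sh_def wm_def Suc_diff_le split: nat.splits)

lemma wm_eq: "0 < s \<Longrightarrow> wm s r = real r / s * w s r"
proof (cases r)
  case (Suc i)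
  assume s: "0 < s"
  have "real (Suc i) * w s (Suc i) = s * w s i" by (rule w_Suc)
  then show ?thesis using s Suc by (simp add: wm_def field_simps del: of_nat_Suc)
qed (simp add: wm_def)

locale ent =
  fixes P :: "nat \<Rightarrow> real" and n m :: nat and lam :: real
  assumes P_nonneg: "\<And>k. 0 \<le> P k" and P_zero: "\<And>k. n < k \<Longrightarrow> P k = 0"
    and P_sum: "(\<Sum>k\<le>n. P k) = 1" and P_mean: "(\<Sum>k\<le>n. real k * P k) = lam"
    and lam_pos: "0 < lam" and P_m: "0 < P m" and P_below: "\<And>k. k < m \<Longrightarrow> P k = 0"
begin

definition a :: "real \<Rightarrow> nat \<Rightarrow> real" where
  "a t r = (\<Sum>k\<le>n. P k * sh k (w t) r)"

definition am :: "real \<Rightarrow> nat \<Rightarrow> real" where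
  "am t r = (case r of 0 \<Rightarrow> 0 | Suc r' \<Rightarrow> a t r')"

lemma m_le_n: "m \<le> n"
  using P_m P_zero by (metis less_irrefl not_le)

lemma P_le1: "P k \<le> 1"
proof (cases "k \<le> n")
  case True
  have "P k \<le> (\<Sum>k\<le>n. P k)"
    using True by (intro member_le_sum) (auto simp: P_nonneg)
  then show ?thesis using P_sum by simp
qed (simp add: P_zero)

lemma a_nonneg: "0 \<le> t \<Longrightarrow> 0 \<le> a t r"
  unfolding a_def by (intro sum_nonneg) (auto simp: sh_def P_nonneg w_nonneg)

lemma a_lower: "0 \<le> t \<Longrightarrow> m \<le> r \<Longrightarrow> P m * w t (r - m) \<le> a t r"
proof -
  assume t: "0 \<le> t" and r: "m \<le> r"
  have "P m * sh m (w t) r \<le> a t r"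
    unfolding a_def using m_le_n
    by (intro member_le_sum) (auto simp: sh_def P_nonneg w_nonneg t)
  then show ?thesis using r by (simp add: sh_def)
qed

lemma a_pos: "0 < t \<Longrightarrow> m \<le> r \<Longrightarrow> 0 < a t r"
  using a_lower[of t r] P_m w_pos[of t "r - m"]
  by (smt (verit) mult_pos_pos)

lemma a_zero: "r < m \<Longrightarrow> a t r = 0"
  unfolding a_def by (intro sum.neutral) (auto simp: sh_def P_below)

lemma a_0: "a 0 r = P r"
proof -
  have "a 0 r = (\<Sum>k\<le>n. if k = r then P k else 0)"
    unfolding a_def by (intro sum.cong) (auto simp: sh_def w_def)
  also have "\<dots> = P r" using P_zero by (auto simp: not_le)
  finally show ?thesis .
qed

lemma a_sums: "(\<lambda>r. a t r) sums 1"
proof -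
  have "(\<lambda>r. \<Sum>k\<le>n. P k * sh k (w t) r) sums (\<Sum>k\<le>n. P k * 1)"
    by (intro sums_sum sums_mult sh_sums w_sums)
  then show ?thesis by (simp add: a_def P_sum)
qed

lemma a_sums1: "(\<lambda>r. real r * a t r) sums (lam + t)"
proof -
  have "(\<lambda>j. real (j + k) * w t j) sums (t + real k)" for k
  proof -
    have "(\<lambda>j. real j * w t j + real k * w t j) sums (t + real k * 1)"
      by (intro sums_add sums_mult w_sums1 w_sums)
    then show ?thesis by (simp add: algebra_simps)
  qed
  then have "(\<lambda>r. \<Sum>k\<le>n. P k * sh k (\<lambda>j. real (j + k) * w t j) r) sums (\<Sum>k\<le>n. P k * (t + real k))"
    by (intro sums_sum sums_mult sh_sums)
  moreover have "(\<Sum>k\<le>n. P k * (t + real k)) = lam + t"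
    using P_sum P_mean by (simp add: algebra_simps sum.distrib sum_distrib_left[symmetric] mult.commute)
  moreover have "real r * a t r = (\<Sum>k\<le>n. P k * sh k (\<lambda>j. real (j + k) * w t j) r)" for r
    unfolding a_def sum_distrib_left by (intro sum.cong) (auto simp: sh_def)
  ultimately show ?thesis by simp
qed

lemma a_le1: "0 \<le> t \<Longrightarrow> a t r \<le> 1"
  using sum_le_suminf[OF sums_summable[OF a_sums], of "{r}" t] a_nonneg sums_unique[OF a_sums, of t]
  by auto

lemma am_zero: "r \<le> m \<Longrightarrow> am t r = 0"
  by (cases r) (auto simp: am_def a_zero)

lemma am_nonneg: "0 \<le> t \<Longrightarrow> 0 \<le> am t r"
  by (cases r) (auto simp: am_def a_nonneg)

lemma am_sums: "(\<lambda>r. am t r) sums 1"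
proof -
  have "(\<lambda>r. am t (Suc r)) sums 1" using a_sums by (simp add: am_def)
  then show ?thesis by (subst (asm) sums_Suc_iff) (simp add: am_def[of t 0])
qed

lemma a_deriv: "((\<lambda>t. a t r) has_real_derivative (am t r - a t r)) (at t)"
proof -
  have "((\<lambda>t. a t r) has_real_derivative (\<Sum>k\<le>n. P k * sh k (\<lambda>j. wm t j - w t j) r)) (at t)"
    unfolding a_def
  proof (intro DERIV_sum)
    fix k
    show "((\<lambda>t. P k * sh k (w t) r) has_real_derivative P k * sh k (\<lambda>j. wm t j - w t j) r) (at t)"
      by (cases "k \<le> r") (auto simp: sh_def intro!: derivative_eq_intros w_deriv)
  qed
  also have "(\<Sum>k\<le>n. P k * sh k (\<lambda>j. wm t j - w t j) r) = 
     (\<Sum>k\<le>n. P k * sh k (wm t) r) - a t r"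
    unfolding a_def sum_subtractf[symmetric] by (intro sum.cong) (auto simp: sh_def algebra_simps)
  also have "(\<Sum>k\<le>n. P k * sh k (wm t) r) = am t r"
    by (cases r) (simp_all add: sh_wm am_def a_def)
  finally show ?thesis .
qed

end

context ent
begin

definition q :: "real \<Rightarrow> nat \<Rightarrow> real" where "q t r = w (lam + t) r"
definition U :: "real \<Rightarrow> nat \<Rightarrow> real" where "U t r = ln (a t r / q t r)"
definition phi :: "real \<Rightarrow> nat \<Rightarrow> real" where "phi t r = a t r * U t r"
definition dphi :: "real \<Rightarrow> nat \<Rightarrow> real" where
  "dphi t r = (am t r - a t r) * U t r + am t r - real r * a t r / (lam + t)"
definition Qt :: "real \<Rightarrow> nat \<Rightarrow> real" where
  "Qt t r = real (r + 1) * a t (r + 1) / (lam + t)"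
definition psi :: "real \<Rightarrow> nat \<Rightarrow> real" where
  "psi t r = a t r * ln (a t r / Qt t r)"

lemma alg1: "(Q::real) \<noteq> 0 \<Longrightarrow> S \<noteq> 0 \<Longrightarrow> ((M - A) * Q - A * (R / S * Q - Q)) / Q = M - R * A / S"
  by (simp add: field_simps)

lemma q_pos: "0 \<le> t \<Longrightarrow> 0 < q t r"
  unfolding q_def using lam_pos by (intro w_pos) simp

lemma q_deriv: "((\<lambda>t. q t r) has_real_derivative (wm (lam + t) r - q t r)) (at t)"
proof -
  have "((\<lambda>t. w (lam + t) r) has_real_derivative (wm (lam + t) r - w (lam + t) r) * 1) (at t)"
    by (rule DERIV_chain2[OF w_deriv]) (auto intro!: derivative_eq_intros)
  then show ?thesis by (simp add: q_def)
qed

lemma phi_deriv: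
  assumes t: "0 < t"
  shows "((\<lambda>t. phi t r) has_real_derivative dphi t r) (at t)"
proof (cases "r < m")
  case True
  then have "(\<lambda>t. phi t r) = (\<lambda>t. 0)" by (simp add: fun_eq_iff phi_def a_zero)
  moreover have "dphi t r = 0" using True by (simp add: dphi_def a_zero am_zero)
  ultimately show ?thesis by simp
next
  case False
  then have r: "m \<le> r" by simp
  have apos: "0 < a t r" using a_pos[OF t r] .
  have qpos: "0 < q t r" using q_pos t by simp
  have s: "0 < lam + t" using lam_pos t by simp
  have d1: "((\<lambda>t. a t r / q t r) has_real_derivative
      ((am t r - a t r) * q t r - a t r * (wm (lam + t) r - q t r)) / (q t r * q t r)) (at t)"
    by (rule DERIV_divide[OF a_deriv q_deriv]) (use qpos in simp)
  have d2: "((\<lambda>t. ln (a t r / q t r)) has_real_derivative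
      inverse (a t r / q t r) * (((am t r - a t r) * q t r - a t r * (wm (lam + t) r - q t r)) / (q t r * q t r))) (at t)"
    by (rule DERIV_chain2[OF DERIV_ln d1]) (use apos qpos in simp)
  note d3 = DERIV_mult[OF a_deriv[of r t] d2]
  have wmq: "wm (lam + t) r = real r / (lam + t) * q t r"
    using wm_eq[OF s] by (simp add: q_def)
  have eq: "(am t r - a t r) * ln (a t r / q t r) +
      inverse (a t r / q t r) * (((am t r - a t r) * q t r - a t r * (wm (lam + t) r - q t r)) / (q t r * q t r)) * a t r
      = dphi t r"
  proof -
    define X where "X = (am t r - a t r) * q t r - a t r * (wm (lam + t) r - q t r)"
    have "inverse (a t r / q t r) * (X / (q t r * q t r)) * a t r = X / q t r"
      using apos qpos by (simp add: field_simps)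
    also have "X / q t r = am t r - real r * a t r / (lam + t)"
      unfolding X_def wmq using qpos s by (intro alg1) auto
    finally show ?thesis unfolding dphi_def U_def X_def by simp
  qed
  show ?thesis unfolding phi_def U_def by (rule DERIV_cong[OF d3 eq])
qed

lemma q_Suc: "0 \<le> t \<Longrightarrow> q t (Suc r) = (lam + t) / real (Suc r) * q t r"
  using w_Suc[of r "lam + t"] by (simp add: q_def field_simps del: of_nat_Suc)

lemma psi_eq:
  assumes t: "0 < t"
  shows "psi t r = a t r * U t r - a t r * U t (Suc r)"
proof (cases "r < m")
  case True
  then show ?thesis by (simp add: psi_def a_zero)
next
  case False
  then have r: "m \<le> r" by simp
  have a1: "0 < a t r" using a_pos[OF t r] .
  have a2: "0 < a t (Suc r)" using a_pos[OF t] r by simp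
  have q1: "0 < q t r" and q2: "0 < q t (Suc r)" using q_pos t by auto
  have s: "0 < lam + t" using lam_pos t by simp
  have "a t r / Qt t r = (a t r / q t r) / (a t (Suc r) / q t (Suc r))"
    unfolding Qt_def q_Suc[OF less_imp_le[OF t]] using a1 a2 q1 s
    by (simp add: field_simps del: of_nat_Suc)
  then have "ln (a t r / Qt t r) = U t r - U t (Suc r)"
    unfolding U_def using a1 a2 q1 q2 by (simp add: ln_div ln_mult)
  then show ?thesis by (simp add: psi_def right_diff_distrib)
qed

end

lemma pow4: "(1 + real r)^2 \<le> 4 ^ r"
proof (induction r)
  case (Suc r)
  have "(1 + real (Suc r))^2 \<le> 4 * (1 + real r)^2"
    by (simp add: power2_eq_square algebra_simps)
  also have "\<dots> \<le> 4 * 4 ^ r" using Suc by simp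
  finally show ?case by simp
qed simp

lemma r_le_pow4: "real r \<le> 4 ^ r"
proof -
  have "real r \<le> (1 + real r)^2" by (simp add: power2_eq_square algebra_simps)
  then show ?thesis using pow4[of r] by linarith
qed

lemma lnfact: "ln (fact j) \<le> real j * real j"
proof (cases "j = 0")
  case False
  have "fact j \<le> (real j) ^ j" using fact_le_power[of j, where 'a=real] by simp
  then have "ln (fact j) \<le> ln (real j ^ j)"
    using False by (subst ln_le_cancel_iff) auto
  also have "\<dots> = real j * ln (real j)" by (simp add: ln_realpow)
  also have "\<dots> \<le> real j * real j"
    using False ln_le_minus_one[of "real j"] by (intro mult_left_mono) auto
  finally show ?thesis .
qed simp

lemma lnfact_nonneg: "0 \<le> ln (fact j :: real)"
  by simp

lemma ln_w: "0 < t \<Longrightarrow> ln (w t j) = -t + real j * ln t - ln (fact j)"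
  by (simp add: w_def ln_div ln_mult ln_realpow)

lemma abs_mult_le: "\<bar>x\<bar> \<le> c \<Longrightarrow> \<bar>real j * x\<bar> \<le> real j * (c::real)"
  by (simp add: abs_mult mult_left_mono)

context ent
begin

definition beta :: "real \<Rightarrow> nat \<Rightarrow> real" where
  "beta T r = (\<Sum>k\<le>n. sh k (\<lambda>j. T ^ j / fact j) r)"
definition betam :: "real \<Rightarrow> nat \<Rightarrow> real" where
  "betam T r = (case r of 0 \<Rightarrow> 0 | Suc r' \<Rightarrow> beta T r')"
definition Bd :: "real \<Rightarrow> nat \<Rightarrow> real" where
  "Bd T r = 4 ^ r * beta T r + 4 ^ r * betam T r"
definition KU :: "real \<Rightarrow> real \<Rightarrow> real" where
  "KU e T = \<bar>ln (P m)\<bar> + 2 * T + lam + 2 * (\<bar>ln e\<bar> + \<bar>ln (lam + T)\<bar>) + 2"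

lemma beta_nonneg: "0 \<le> T \<Longrightarrow> 0 \<le> beta T r"
  unfolding beta_def by (intro sum_nonneg) (auto simp: sh_def)

lemma betam_nonneg: "0 \<le> T \<Longrightarrow> 0 \<le> betam T r"
  by (cases r) (auto simp: betam_def beta_nonneg)

lemma Bd_nonneg: "0 \<le> T \<Longrightarrow> 0 \<le> Bd T r"
  by (simp add: Bd_def beta_nonneg betam_nonneg)

lemma KU_nonneg: "0 \<le> T \<Longrightarrow> 0 \<le> KU e T"
  using lam_pos by (simp add: KU_def)

lemma w_le_pow: "0 \<le> t \<Longrightarrow> t \<le> T \<Longrightarrow> w t j \<le> T ^ j / fact j"
proof -
  assume t: "0 \<le> t" "t \<le> T"
  have "exp (-t) * t ^ j \<le> 1 * T ^ j"
    using t by (intro mult_mono power_mono) auto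
  then show ?thesis by (simp add: w_def divide_right_mono)
qed

lemma a_le_beta: "0 \<le> t \<Longrightarrow> t \<le> T \<Longrightarrow> a t r \<le> beta T r"
  unfolding a_def beta_def
proof (intro sum_mono)
  fix k assume t: "0 \<le> t" "t \<le> T"
  show "P k * sh k (w t) r \<le> sh k (\<lambda>j. T ^ j / fact j) r"
  proof (cases "k \<le> r")
    case True
    have "P k * w t (r - k) \<le> 1 * (T ^ (r - k) / fact (r - k))"
      using t by (intro mult_mono P_le1 w_le_pow) (auto simp: w_nonneg)
    then show ?thesis using True by (simp add: sh_def)
  qed (simp add: sh_def)
qed

lemma am_le_betam: "0 \<le> t \<Longrightarrow> t \<le> T \<Longrightarrow> am t r \<le> betam T r"
  by (cases r) (auto simp: am_def betam_def a_le_beta)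

lemma summable_beta4: "summable (\<lambda>r. 4 ^ r * beta T r)"
proof -
  have eq: "4 ^ r * beta T r = (\<Sum>k\<le>n. sh k (\<lambda>j. 4 ^ k * (inverse (fact j) * (4 * T) ^ j)) r)" for r
    unfolding beta_def sum_distrib_left
  proof (intro sum.cong refl)
    fix k show "4 ^ r * sh k (\<lambda>j. T ^ j / fact j) r = sh k (\<lambda>j. 4 ^ k * (inverse (fact j) * (4 * T) ^ j)) r"
    proof (cases "k \<le> r")
      case True
      then have "(4::real) ^ r = 4 ^ k * 4 ^ (r - k)" by (simp add: power_add[symmetric])
      then show ?thesis using True by (simp add: sh_def power_mult_distrib divide_inverse)
    qed (simp add: sh_def)
  qed
  show ?thesis unfolding eq
    by (intro summable_sum summable_sh summable_mult summable_exp)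
qed

lemma summable_Bd: "summable (Bd T)"
proof -
  have "summable (\<lambda>r. 4 ^ Suc r * betam T (Suc r))"
    using summable_mult[OF summable_beta4[of T], of 4] by (simp add: betam_def mult.assoc)
  then have "summable (\<lambda>r. 4 ^ r * betam T r)" by (subst (asm) summable_Suc_iff)
  then show ?thesis unfolding Bd_def[abs_def] by (intro summable_add summable_beta4)
qed

lemma U_bound:
  assumes e: "0 < e" "e \<le> t" "t \<le> T" and r: "m \<le> r"
  shows "\<bar>U t r\<bar> \<le> KU e T * 4 ^ r"
proof -
  define L where "L = \<bar>ln e\<bar> + \<bar>ln (lam + T)\<bar>"
  have t: "0 < t" using e by simp
  have s: "0 < lam + t" using lam_pos t by simp
  have L0: "0 \<le> L" by (simp add: L_def)
  have lnt: "\<bar>ln t\<bar> \<le> L"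
  proof -
    have "ln e \<le> ln t" using e by simp
    moreover have "ln t \<le> ln (lam + T)" using e lam_pos by simp
    ultimately show ?thesis unfolding L_def by linarith
  qed
  have lns: "\<bar>ln (lam + t)\<bar> \<le> L"
  proof -
    have "ln e \<le> ln (lam + t)" using e lam_pos by simp
    moreover have "ln (lam + t) \<le> ln (lam + T)" using e lam_pos by simp
    ultimately show ?thesis unfolding L_def by linarith
  qed
  have apos: "0 < a t r" using a_pos[OF t r] .
  have qpos: "0 < q t r" using q_pos t by simp
  have lnq: "ln (q t r) = -(lam + t) + real r * ln (lam + t) - ln (fact r)"
    unfolding q_def by (rule ln_w[OF s])
  have "\<bar>real r * ln (lam + t)\<bar> \<le> real r * L" by (rule abs_mult_le[OF lns])
  then have bq: "\<bar>ln (q t r)\<bar> \<le> lam + T + real r * L + real r * real r"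
    unfolding lnq using lnfact[of r] lnfact_nonneg[of r] e lam_pos by linarith
  have "ln (a t r) \<le> 0" using apos a_le1[of t r] t by simp
  have wpos: "0 < w t (r - m)" using w_pos t by simp
  have "ln (P m * w t (r - m)) \<le> ln (a t r)"
    using a_lower[of t r] r t P_m wpos apos by (subst ln_le_cancel_iff) auto
  moreover have "ln (P m * w t (r - m)) = ln (P m) + (-t + real (r - m) * ln t - ln (fact (r - m)))"
    using P_m wpos by (simp add: ln_mult ln_w[OF t])
  moreover have "\<bar>real (r - m) * ln t\<bar> \<le> real (r - m) * L" by (rule abs_mult_le[OF lnt])
  moreover have "real (r - m) * L \<le> real r * L" using L0 by (intro mult_right_mono) auto
  moreover have "ln (fact (r - m)) \<le> real r * real r"
    using lnfact[of "r - m"] by (smt (verit) diff_le_self mult_mono of_nat_0_le_iff of_nat_mono)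
  ultimately have ba: "\<bar>ln (a t r)\<bar> \<le> \<bar>ln (P m)\<bar> + T + real r * L + real r * real r"
    using \<open>ln (a t r) \<le> 0\<close> e by linarith
  have "U t r = ln (a t r) - ln (q t r)" unfolding U_def using apos qpos by (simp add: ln_div)
  then have bU: "\<bar>U t r\<bar> \<le> (\<bar>ln (P m)\<bar> + 2 * T + lam) + 2 * (real r * L) + 2 * (real r * real r)"
    using ba bq by linarith
  define C where "C = \<bar>ln (P m)\<bar> + 2 * T + lam"
  have C0: "0 \<le> C" unfolding C_def using e lam_pos by simp
  have sq: "1 \<le> (1 + real r)^2" "real r \<le> (1 + real r)^2" "real r * real r \<le> (1 + real r)^2"
    by (simp_all add: power2_eq_square algebra_simps)
  have "C * 1 \<le> C * (1 + real r)^2" using sq C0 by (intro mult_left_mono) auto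
  moreover have "L * real r \<le> L * (1 + real r)^2" using sq L0 by (intro mult_left_mono) auto
  ultimately have "C + 2 * (real r * L) + 2 * (real r * real r) \<le>
        C * (1 + real r)^2 + 2 * L * (1 + real r)^2 + 2 * (1 + real r)^2"
    using sq by (simp add: algebra_simps)
  also have "\<dots> = KU e T * (1 + real r)^2" unfolding KU_def C_def L_def by (simp add: algebra_simps)
  also have "\<dots> \<le> KU e T * 4 ^ r" using pow4[of r] KU_nonneg[of T e] e
    by (intro mult_left_mono) auto
  finally show ?thesis using bU unfolding C_def by linarith
qed

end

context ent
begin

definition A :: "real \<Rightarrow> real" where "A t = (\<Sum>r. phi t r)"
definition G :: "real \<Rightarrow> real" where "G t = (\<Sum>r. psi t r)"

lemma beta_le_Bd: "0 \<le> T \<Longrightarrow> 4 ^ r * beta T r \<le> Bd T r"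
  by (simp add: Bd_def betam_nonneg)

lemma betam_le_Bd: "0 \<le> T \<Longrightarrow> 4 ^ r * betam T r \<le> Bd T r"
  by (simp add: Bd_def beta_nonneg)

lemma phi_bound:
  assumes e: "0 < e" "e \<le> t" "t \<le> T"
  shows "\<bar>phi t r\<bar> \<le> KU e T * Bd T r"
proof (cases "r < m")
  case True
  then show ?thesis using e by (simp add: phi_def a_zero KU_nonneg Bd_nonneg)
next
  case False
  have t: "0 \<le> t" "0 \<le> T" using e by auto
  have "\<bar>phi t r\<bar> = a t r * \<bar>U t r\<bar>" using a_nonneg[OF t(1)] by (simp add: phi_def abs_mult)
  also have "\<dots> \<le> beta T r * (KU e T * 4 ^ r)"
    using False e by (intro mult_mono U_bound a_le_beta beta_nonneg) (auto simp: a_nonneg)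
  also have "\<dots> = KU e T * (4 ^ r * beta T r)" by simp
  also have "\<dots> \<le> KU e T * Bd T r" using t by (intro mult_left_mono beta_le_Bd KU_nonneg) auto
  finally show ?thesis .
qed

lemma aU_Suc_bound:
  assumes e: "0 < e" "e \<le> t" "t \<le> T"
  shows "\<bar>a t r * U t (Suc r)\<bar> \<le> 4 * KU e T * Bd T r"
proof (cases "r < m")
  case True
  then show ?thesis using e by (simp add: a_zero KU_nonneg Bd_nonneg)
next
  case False
  have t: "0 \<le> t" "0 \<le> T" using e by auto
  have "\<bar>a t r * U t (Suc r)\<bar> = a t r * \<bar>U t (Suc r)\<bar>" using a_nonneg[OF t(1)] by (simp add: abs_mult)
  also have "\<dots> \<le> beta T r * (KU e T * 4 ^ Suc r)"
    using False e by (intro mult_mono U_bound a_le_beta beta_nonneg) (auto simp: a_nonneg)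
  also have "\<dots> = 4 * KU e T * (4 ^ r * beta T r)" by simp
  also have "\<dots> \<le> 4 * KU e T * Bd T r" using t by (intro mult_left_mono beta_le_Bd) (auto simp: KU_nonneg)
  finally show ?thesis .
qed

lemma amU_bound:
  assumes e: "0 < e" "e \<le> t" "t \<le> T"
  shows "\<bar>am t r * U t r\<bar> \<le> KU e T * Bd T r"
proof (cases "r \<le> m")
  case True
  then show ?thesis using e by (simp add: am_zero KU_nonneg Bd_nonneg)
next
  case False
  have t: "0 \<le> t" "0 \<le> T" using e by auto
  have "\<bar>am t r * U t r\<bar> = am t r * \<bar>U t r\<bar>" using am_nonneg[OF t(1)] by (simp add: abs_mult)
  also have "\<dots> \<le> betam T r * (KU e T * 4 ^ r)"
    using False e by (intro mult_mono U_bound am_le_betam betam_nonneg) (auto simp: am_nonneg)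
  also have "\<dots> = KU e T * (4 ^ r * betam T r)" by simp
  also have "\<dots> \<le> KU e T * Bd T r" using t by (intro mult_left_mono betam_le_Bd KU_nonneg) auto
  finally show ?thesis .
qed

lemma abs4: "0 \<le> (z::real) \<Longrightarrow> 0 \<le> u \<Longrightarrow> \<bar>x - y + z - u\<bar> \<le> \<bar>x\<bar> + \<bar>y\<bar> + z + u"
  by (simp add: abs_if)

definition KD :: "real \<Rightarrow> real \<Rightarrow> real" where "KD e T = 2 * KU e T + 1 + 1 / lam"

lemma dphi_bound:
  assumes e: "0 < e" "e \<le> t" "t \<le> T"
  shows "\<bar>dphi t r\<bar> \<le> KD e T * Bd T r"
proof -
  have t: "0 \<le> t" "0 \<le> T" using e by auto
  have s: "lam \<le> lam + t" using t by simp
  have eq: "dphi t r = am t r * U t r - phi t r + am t r - real r * a t r / (lam + t)"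
    by (simp add: dphi_def phi_def algebra_simps)
  have b1: "am t r \<le> Bd T r"
  proof -
    have "am t r \<le> betam T r" using am_le_betam t e by simp
    also have "\<dots> \<le> 4 ^ r * betam T r"
      using mult_right_mono[OF one_le_power[of "4::real" r] betam_nonneg[OF t(2)]] by simp
    finally show ?thesis using betam_le_Bd[OF t(2), of r] by simp
  qed
  have b2: "real r * a t r / (lam + t) \<le> Bd T r / lam"
  proof -
    have "real r * a t r / (lam + t) \<le> real r * a t r / lam"
      using lam_pos s a_nonneg[OF t(1)] by (intro divide_left_mono) auto
    also have "real r * a t r \<le> 4 ^ r * beta T r"
      using t e by (intro mult_mono r_le_pow4 a_le_beta) (auto simp: a_nonneg)
    then have "real r * a t r / lam \<le> 4 ^ r * beta T r / lam"
      using lam_pos by (intro divide_right_mono) auto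
    also have "\<dots> \<le> Bd T r / lam" using lam_pos beta_le_Bd[OF t(2)] by (intro divide_right_mono) auto
    finally show ?thesis .
  qed
  have b3: "0 \<le> real r * a t r / (lam + t)" using a_nonneg[OF t(1)] s lam_pos by simp
  have "\<bar>dphi t r\<bar> \<le> \<bar>am t r * U t r\<bar> + \<bar>phi t r\<bar> + am t r + real r * a t r / (lam + t)"
    unfolding eq using am_nonneg[OF t(1), of r] b3 by (rule abs4)
  also have "\<dots> \<le> KU e T * Bd T r + KU e T * Bd T r + Bd T r + Bd T r / lam"
    using amU_bound[OF e, of r] phi_bound[OF e, of r] b1 b2 by linarith
  also have "\<dots> = KD e T * Bd T r" by (simp add: KD_def algebra_simps)
  finally show ?thesis .
qed

lemma summable_bound: "(\<And>r. \<bar>f r\<bar> \<le> C * Bd T r) \<Longrightarrow> summable (\<lambda>r. \<bar>f r :: real\<bar>)"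
  by (rule summable_comparison_test[where g = "\<lambda>r. C * Bd T r"]) (auto intro: summable_mult summable_Bd)

lemma summable_bound': "(\<And>r. \<bar>f r\<bar> \<le> C * Bd T r) \<Longrightarrow> summable (\<lambda>r. f r :: real)"
  using summable_bound summable_rabs_cancel by blast

lemma dphi_sums:
  assumes t: "0 < t"
  shows "(\<lambda>r. dphi t r) sums (- G t)"
proof -
  have e: "0 < t" "t \<le> t" "t \<le> t" using t by auto
  define X where "X = (\<Sum>r. a t r * U t (Suc r))"
  define Y where "Y = (\<Sum>r. phi t r)"
  have sX: "(\<lambda>r. a t r * U t (Suc r)) sums X"
    unfolding X_def by (intro summable_sums summable_bound'[OF aU_Suc_bound[OF e]])
  have sY: "(\<lambda>r. phi t r) sums Y"
    unfolding Y_def by (intro summable_sums summable_bound'[OF phi_bound[OF e]])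
  have "(\<lambda>r. am t (Suc r) * U t (Suc r)) sums X" using sX by (simp add: am_def)
  then have sX': "(\<lambda>r. am t r * U t r) sums X"
    by (subst (asm) sums_Suc_iff) (simp add: am_def[of t 0])
  have s1: "(\<lambda>r. real r * a t r / (lam + t)) sums ((lam + t) / (lam + t))"
    by (intro sums_divide a_sums1)
  have "(\<lambda>r. am t r * U t r - phi t r + am t r - real r * a t r / (lam + t)) sums
      (X - Y + 1 - (lam + t) / (lam + t))"
    by (intro sums_diff sums_add sX' sY am_sums s1)
  moreover have "(lam + t) / (lam + t) = 1" using lam_pos t by simp
  ultimately have d: "(\<lambda>r. dphi t r) sums (X - Y)" by (simp add: dphi_def phi_def algebra_simps)
  have "(\<lambda>r. psi t r) sums (Y - X)"
  proof -
    have "(\<lambda>r. phi t r - a t r * U t (Suc r)) sums (Y - X)" by (intro sums_diff sY sX)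
    then show ?thesis using psi_eq[OF t] by (simp add: phi_def)
  qed
  then have "G t = Y - X" unfolding G_def by (simp add: sums_iff)
  then show ?thesis using d by simp
qed

lemma psi_summable: "0 < t \<Longrightarrow> summable (\<lambda>r. \<bar>psi t r\<bar>)"
proof -
  assume t: "0 < t"
  have e: "0 < t" "t \<le> t" "t \<le> t" using t by auto
  show ?thesis
  proof (rule summable_bound)
    fix r
    have "\<bar>psi t r\<bar> \<le> \<bar>phi t r\<bar> + \<bar>a t r * U t (Suc r)\<bar>"
      using psi_eq[OF t, of r] by (simp add: phi_def)
    also have "\<dots> \<le> KU t t * Bd t r + 4 * KU t t * Bd t r"
      by (intro add_mono phi_bound[OF e] aU_Suc_bound[OF e])
    also have "\<dots> = (5 * KU t t) * Bd t r" by simp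
    finally show "\<bar>psi t r\<bar> \<le> (5 * KU t t) * Bd t r" .
  qed
qed

lemma A_deriv:
  assumes t: "0 < t"
  shows "(A has_real_derivative - G t) (at t)"
proof -
  define S where "S = {t/2..t+1}"
  have S0: "\<And>x. x \<in> S \<Longrightarrow> 0 < x" using t by (auto simp: S_def)
  have eS: "\<And>x. x \<in> S \<Longrightarrow> 0 < t/2 \<and> t/2 \<le> x \<and> x \<le> t + 1" using t by (auto simp: S_def)
  have "summable (\<lambda>r. phi t r)"
    using phi_bound[of t t t] t by (intro summable_bound') auto
  have uc: "uniformly_convergent_on S (\<lambda>N x. \<Sum>r<N. dphi x r)"
  proof (rule Weierstrass_m_test')
    show "\<And>r x. x \<in> S \<Longrightarrow> norm (dphi x r) \<le> KD (t/2) (t+1) * Bd (t+1) r"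
      using eS dphi_bound by simp
    show "summable (\<lambda>r. KD (t/2) (t+1) * Bd (t+1) r)" by (intro summable_mult summable_Bd)
  qed
  have "((\<lambda>x. \<Sum>r. phi x r) has_real_derivative (\<Sum>r. dphi t r)) (at t)"
  proof (rule has_field_derivative_series'(2)[of S "\<lambda>r x. phi x r" "\<lambda>r x. dphi x r" t])
    show "convex S" by (simp add: S_def)
    show "\<And>r x. x \<in> S \<Longrightarrow> ((\<lambda>x. phi x r) has_real_derivative dphi x r) (at x within S)"
      using S0 phi_deriv has_field_derivative_at_within by blast
    show "uniformly_convergent_on S (\<lambda>N x. \<Sum>r<N. dphi x r)" by (rule uc)
    show "t \<in> S" using t by (simp add: S_def)
    show "summable (\<lambda>r. phi t r)" by fact
    show "t \<in> interior S" using t by (simp add: S_def)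
  qed
  moreover have "(\<Sum>r. dphi t r) = - G t" using dphi_sums[OF t] by (simp add: sums_iff)
  ultimately show ?thesis by (simp add: A_def[abs_def])
qed

lemma isCont_a: "isCont (\<lambda>x. a x r) x"
  using DERIV_continuous[OF a_deriv[of r x]] by simp

lemma isCont_am: "isCont (\<lambda>x. am x r) x"
  by (cases r) (auto simp: am_def isCont_a)

lemma isCont_q: "isCont (\<lambda>x. q x r) x"
  using DERIV_continuous[OF q_deriv[of r x]] by simp

lemma isCont_dphi: "0 < x \<Longrightarrow> isCont (\<lambda>x. dphi x r) x"
proof (cases "r < m")
  case True
  then have "(\<lambda>x. dphi x r) = (\<lambda>x. 0)"
    by (simp add: fun_eq_iff dphi_def a_zero am_zero)
  then show ?thesis by simp
next
  case False
  assume x: "0 < x"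
  have "0 < a x r" using a_pos[OF x] False by simp
  moreover have "0 < q x r" using q_pos x by simp
  moreover have "lam + x \<noteq> 0" using lam_pos x by simp
  ultimately show ?thesis unfolding dphi_def U_def
    by (intro continuous_intros isCont_a isCont_am isCont_q) auto
qed

lemma G_cont: "continuous_on {0<..} G"
proof (rule continuous_at_imp_continuous_on, intro ballI)
  fix t :: real assume "t \<in> {0<..}"
  then have t: "0 < t" by simp
  define S where "S = {t/2..t+1}"
  have S0: "\<And>x. x \<in> S \<Longrightarrow> 0 < x" using t by (auto simp: S_def)
  have eS: "\<And>x. x \<in> S \<Longrightarrow> 0 < t/2 \<and> t/2 \<le> x \<and> x \<le> t + 1" using t by (auto simp: S_def)
  have ul: "uniform_limit S (\<lambda>N x. \<Sum>r<N. dphi x r) (\<lambda>x. \<Sum>r. dphi x r) sequentially"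
  proof (rule Weierstrass_m_test)
    show "\<And>r x. x \<in> S \<Longrightarrow> norm (dphi x r) \<le> KD (t/2) (t+1) * Bd (t+1) r"
      using eS dphi_bound by simp
    show "summable (\<lambda>r. KD (t/2) (t+1) * Bd (t+1) r)" by (intro summable_mult summable_Bd)
  qed
  have "continuous_on S (\<lambda>x. \<Sum>r. dphi x r)"
  proof (rule uniform_limit_theorem[OF _ ul])
    show "\<forall>\<^sub>F N in sequentially. continuous_on S (\<lambda>x. \<Sum>r<N. dphi x r)"
      using S0 isCont_dphi
      by (intro always_eventually allI continuous_on_sum ballI continuous_at_imp_continuous_on) auto
  qed simp
  moreover have "\<And>x. x \<in> S \<Longrightarrow> (\<Sum>r. dphi x r) = - G x"
    using S0 dphi_sums by (simp add: sums_iff)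
  ultimately have "continuous_on S (\<lambda>x. - G x)" using continuous_on_cong by force
  then have "continuous_on S (\<lambda>x. - (- G x))" by (rule continuous_on_minus)
  then have "continuous_on S G" by simp
  then show "isCont G t" by (rule continuous_on_interior) (use t in \<open>simp add: S_def\<close>)
qed

end

lemma xlnx_le: "0 < x \<Longrightarrow> x \<le> 1 \<Longrightarrow> \<bar>x * ln x\<bar> \<le> 2 * sqrt (x::real)"
proof -
  assume x: "0 < x" "x \<le> 1"
  have sx: "0 < sqrt x" using x by simp
  have "- ln (sqrt x) = ln (1 / sqrt x)" using sx by (simp add: ln_div)
  also have "\<dots> \<le> 1 / sqrt x - 1" using sx by (intro ln_le_minus_one) auto
  finally have "- ln (sqrt x) \<le> 1 / sqrt x" by simp
  moreover have "ln x = 2 * ln (sqrt x)" using x by (simp add: ln_sqrt)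
  ultimately have "- ln x \<le> 2 / sqrt x" by simp
  then have "x * (- ln x) \<le> x * (2 / sqrt x)" using x by (intro mult_left_mono) auto
  also have "x * (2 / sqrt x) = 2 * sqrt x" using x
    by (metis real_div_sqrt less_imp_le times_divide_eq_right mult.commute)
  finally have "- (x * ln x) \<le> 2 * sqrt x" by simp
  moreover have "x * ln x \<le> 0" using x by (simp add: mult_nonneg_nonpos)
  ultimately show ?thesis using sx by linarith
qed

lemma xlnx_lim: "((\<lambda>x::real. x * ln x) \<longlongrightarrow> 0) (at_right 0)"
proof (rule Lim_null_comparison)
  show "\<forall>\<^sub>F x in at_right 0. norm (x * ln x) \<le> 2 * sqrt x"
  proof -
    have "\<forall>\<^sub>F x in at_right 0. (0::real) < x \<and> x < 1"
      using eventually_at_right_real[of 0 1] by simp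
    then show ?thesis by eventually_elim (use xlnx_le in auto)
  qed
  have "((\<lambda>x::real. 2 * sqrt x) \<longlongrightarrow> 2 * sqrt 0) (at_right 0)"
    by (intro tendsto_intros)
  then show "((\<lambda>x::real. 2 * sqrt x) \<longlongrightarrow> 0) (at_right 0)" by simp
qed

lemma xlnx_cont: "continuous_on {0..1} (\<lambda>x::real. x * ln x)"
proof (rule continuous_on_IccI)
  show "((\<lambda>x::real. x * ln x) \<longlongrightarrow> 0 * ln 0) (at_right 0)" using xlnx_lim by simp
  show "((\<lambda>x::real. x * ln x) \<longlongrightarrow> 1 * ln 1) (at_left 1)"
    by (intro tendsto_intros) auto
  show "\<And>x::real. 0 < x \<Longrightarrow> x < 1 \<Longrightarrow> ((\<lambda>x. x * ln x) \<longlongrightarrow> x * ln x) (at x)"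
    by (intro tendsto_intros) auto
qed simp

lemma tln: "0 < t \<Longrightarrow> t \<le> 1 \<Longrightarrow> 0 < j \<Longrightarrow> t ^ j * (- ln t) \<le> (1::real)"
proof -
  assume t: "0 < t" "t \<le> 1" and j: "0 < j"
  have l: "0 \<le> - ln t" using t by simp
  have "- ln t = ln (1 / t)" using t by (simp add: ln_div)
  also have "\<dots> \<le> 1 / t - 1" using t by (intro ln_le_minus_one) auto
  finally have "t * (- ln t) \<le> 1" using t by (simp add: field_simps)
  moreover have "t ^ j = t ^ (j - 1) * t" using j by (cases j) auto
  moreover have "t ^ (j - 1) \<le> 1" using t by (simp add: power_le_one)
  ultimately have "t ^ j * (- ln t) = t ^ (j - 1) * (t * (- ln t))" by simp
  also have "\<dots> \<le> 1 * 1"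
  proof (rule mult_mono)
    show "0 \<le> t * (- ln t)" using t l by (intro mult_nonneg_nonneg) auto
  qed (use \<open>t ^ (j - 1) \<le> 1\<close> \<open>t * (- ln t) \<le> 1\<close> in auto)
  finally show ?thesis by simp
qed

context ent
begin

lemma phi_alt: "0 \<le> t \<Longrightarrow> phi t r = a t r * ln (a t r) - a t r * ln (q t r)"
proof (cases "a t r = 0")
  case True
  then show ?thesis by (simp add: phi_def)
next
  case False
  assume t: "0 \<le> t"
  then have "0 < a t r" using a_nonneg[OF t, of r] False by simp
  moreover have "0 < q t r" using q_pos[OF t] by simp
  ultimately have "ln (a t r / q t r) = ln (a t r) - ln (q t r)" by (simp add: ln_div)
  then show ?thesis by (simp add: phi_def U_def right_diff_distrib)
qed

definition Kq :: real where "Kq = lam + \<bar>ln lam\<bar> + \<bar>ln (lam + 1)\<bar> + 2"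

lemma lnq_bound:
  assumes t: "0 \<le> t" "t \<le> 1"
  shows "\<bar>ln (q t r)\<bar> \<le> Kq * 4 ^ r"
proof -
  define L where "L = \<bar>ln lam\<bar> + \<bar>ln (lam + 1)\<bar>"
  have s: "0 < lam + t" using lam_pos t by simp
  have L0: "0 \<le> L" by (simp add: L_def)
  have lns: "\<bar>ln (lam + t)\<bar> \<le> L"
  proof -
    have "ln lam \<le> ln (lam + t)" using t lam_pos by simp
    moreover have "ln (lam + t) \<le> ln (lam + 1)" using t lam_pos by simp
    ultimately show ?thesis unfolding L_def by linarith
  qed
  have lnq: "ln (q t r) = -(lam + t) + real r * ln (lam + t) - ln (fact r)"
    unfolding q_def by (rule ln_w[OF s])
  have "\<bar>real r * ln (lam + t)\<bar> \<le> real r * L" by (rule abs_mult_le[OF lns])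
  then have bq: "\<bar>ln (q t r)\<bar> \<le> (lam + 1) + real r * L + real r * real r"
    unfolding lnq using lnfact[of r] lnfact_nonneg[of r] t lam_pos by linarith
  have sq: "1 \<le> (1 + real r)^2" "real r \<le> (1 + real r)^2" "real r * real r \<le> (1 + real r)^2"
    by (simp_all add: power2_eq_square algebra_simps)
  have "(lam + 1) * 1 \<le> (lam + 1) * (1 + real r)^2" using sq lam_pos by (intro mult_left_mono) auto
  moreover have "L * real r \<le> L * (1 + real r)^2" using sq L0 by (intro mult_left_mono) auto
  ultimately have "(lam + 1) + real r * L + real r * real r \<le> Kq * (1 + real r)^2"
    using sq unfolding Kq_def L_def by (simp add: algebra_simps)
  also have "\<dots> \<le> Kq * 4 ^ r" using pow4[of r] lam_pos
    by (intro mult_left_mono) (auto simp: Kq_def)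
  finally show ?thesis using bq by linarith
qed

lemma a_lnt_bound:
  assumes t: "0 < t" "t \<le> 1" and r: "n < r"
  shows "a t r * (- ln t) \<le> beta 1 r"
  unfolding a_def beta_def sum_distrib_right
proof (intro sum_mono)
  fix k assume k: "k \<in> {..n}"
  show "P k * sh k (w t) r * - ln t \<le> sh k (\<lambda>j. 1 ^ j / fact j) r"
  proof -
    have kr: "k \<le> r" "0 < r - k" using k r by auto
    have "w t (r - k) * (- ln t) = exp (-t) * (t ^ (r - k) * (- ln t)) / fact (r - k)"
      by (simp add: w_def)
    also have "\<dots> \<le> 1 * 1 / fact (r - k)"
    proof -
      have "0 \<le> t ^ (r - k) * (- ln t)" using t by (intro mult_nonneg_nonneg) auto
      then show ?thesis using tln[OF t kr(2)] t by (intro divide_right_mono mult_mono) auto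
    qed
    finally have "w t (r - k) * (- ln t) \<le> 1 / fact (r - k)" by simp
    moreover have "0 \<le> w t (r - k) * (- ln t)" using t w_nonneg[of t "r - k"] by (intro mult_nonneg_nonneg) auto
    ultimately have "P k * (w t (r - k) * (- ln t)) \<le> 1 * (1 / fact (r - k))"
      by (intro mult_mono P_le1) (auto simp: P_nonneg)
    then show ?thesis using kr by (simp add: sh_def mult.assoc)
  qed
qed

definition M0 :: "nat \<Rightarrow> real" where
  "M0 r = (if r \<le> n then 1 + Kq * 4 ^ r else 0) + (\<bar>ln (P m)\<bar> + 2 + Kq) * Bd 1 r"

lemma summable_M0: "summable M0"
  unfolding M0_def[abs_def]
  by (intro summable_add summable_mult summable_Bd summable_finite[of "{..n}"]) auto

lemma phi_bound0:
  assumes t: "0 \<le> t" "t \<le> 1"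
  shows "\<bar>phi t r\<bar> \<le> M0 r"
proof -
  have Kq0: "0 \<le> Kq" using lam_pos by (simp add: Kq_def)
  have a01: "0 \<le> a t r" "a t r \<le> 1" using a_nonneg a_le1 t by auto
  have aq: "\<bar>a t r * ln (q t r)\<bar> \<le> a t r * (Kq * 4 ^ r)"
    using a01 lnq_bound[OF t] by (simp add: abs_mult mult_left_mono)
  have phi_le: "\<bar>phi t r\<bar> \<le> \<bar>a t r * ln (a t r)\<bar> + \<bar>a t r * ln (q t r)\<bar>"
    unfolding phi_alt[OF t(1)] by linarith
  have B0: "0 \<le> Bd 1 r" by (rule Bd_nonneg) simp
  have rest0: "0 \<le> (\<bar>ln (P m)\<bar> + 2 + Kq) * Bd 1 r" using B0 Kq0 by simp
  show ?thesis
  proof (cases "r \<le> n")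
    case True
    have "\<bar>a t r * ln (a t r)\<bar> \<le> 1"
    proof (cases "a t r = 0")
      case False
      then have ap: "0 < a t r" using a01 by simp
      have "- ln (a t r) = ln (1 / a t r)" using ap by (simp add: ln_div)
      also have "\<dots> \<le> 1 / a t r - 1" using ap by (intro ln_le_minus_one) auto
      finally have "a t r * (- ln (a t r)) \<le> 1 - a t r" using ap by (simp add: field_simps)
      moreover have "ln (a t r) \<le> 0" using ap a01 by simp
      moreover have "a t r * ln (a t r) \<le> 0" using ap a01 by (simp add: mult_nonneg_nonpos)
      ultimately show ?thesis using ap by (simp add: abs_if)
    qed simp
    moreover have "a t r * (Kq * 4 ^ r) \<le> 1 * (Kq * 4 ^ r)" using a01 Kq0 by (intro mult_right_mono) auto
    ultimately have "\<bar>phi t r\<bar> \<le> 1 + Kq * 4 ^ r" using phi_le aq by linarith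
    then show ?thesis using True rest0 by (simp add: M0_def)
  next
    case False
    have rn: "n < r" using False by simp
    have aln: "\<bar>a t r * ln (a t r)\<bar> \<le> (\<bar>ln (P m)\<bar> + 2) * Bd 1 r"
    proof (cases "t = 0")
      case True
      then have "a t r = 0" using rn by (simp add: a_0 P_zero)
      then show ?thesis using B0 by simp
    next
      case False
      then have tp: "0 < t" using t by simp
      have r: "m \<le> r" using rn m_le_n by simp
      have ap: "0 < a t r" using a_pos[OF tp r] .
      have wpos: "0 < w t (r - m)" using w_pos tp by simp
      have "ln (P m * w t (r - m)) \<le> ln (a t r)"
        using a_lower[of t r] r tp P_m wpos ap by (subst ln_le_cancel_iff) auto
      moreover have "ln (P m * w t (r - m)) = ln (P m) + (-t + real (r - m) * ln t - ln (fact (r - m)))"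
        using P_m wpos by (simp add: ln_mult ln_w[OF tp])
      moreover have "ln (fact (r - m)) \<le> real r * real r"
        using lnfact[of "r - m"] by (smt (verit) diff_le_self mult_mono of_nat_0_le_iff of_nat_mono)
      moreover have "- (real (r - m) * ln t) \<le> real r * (- ln t)"
        using tp t mult_right_mono[of "real (r - m)" "real r" "- ln t"] by simp
      ultimately have la: "- ln (a t r) \<le> (\<bar>ln (P m)\<bar> + 1 + real r * real r) + real r * (- ln t)"
        using t by linarith
      have "a t r * ln (a t r) \<le> 0" using ap a01 by (simp add: mult_nonneg_nonpos)
      then have "\<bar>a t r * ln (a t r)\<bar> = a t r * (- ln (a t r))"
        by simp
      also have "\<dots> \<le> a t r * ((\<bar>ln (P m)\<bar> + 1 + real r * real r) + real r * (- ln t))"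
        using la ap by (intro mult_left_mono) auto
      also have "\<dots> = a t r * (\<bar>ln (P m)\<bar> + 1 + real r * real r) + real r * (a t r * (- ln t))"
        by (simp add: algebra_simps)
      also have "\<dots> \<le> beta 1 r * (\<bar>ln (P m)\<bar> + 1 + real r * real r) + real r * beta 1 r"
        using a_lnt_bound[OF tp t(2) rn] t a_le_beta[of t 1 r]
        by (intro add_mono mult_right_mono mult_left_mono) auto
      also have "\<dots> \<le> (\<bar>ln (P m)\<bar> + 2) * ((1 + real r)^2 * beta 1 r)"
      proof -
        have b0: "0 \<le> beta 1 r" by (rule beta_nonneg) simp
        have "(\<bar>ln (P m)\<bar> + 1 + real r * real r) + real r \<le> (\<bar>ln (P m)\<bar> + 2) * (1 + real r)^2"
        proof -
          have "\<bar>ln (P m)\<bar> * 1 \<le> \<bar>ln (P m)\<bar> * (1 + real r)^2"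
            by (intro mult_left_mono) (auto simp: power2_eq_square algebra_simps)
          then show ?thesis by (simp add: power2_eq_square algebra_simps)
        qed
        then have "beta 1 r * ((\<bar>ln (P m)\<bar> + 1 + real r * real r) + real r) \<le>
                   beta 1 r * ((\<bar>ln (P m)\<bar> + 2) * (1 + real r)^2)"
          using b0 by (intro mult_left_mono) auto
        then show ?thesis by (simp add: algebra_simps)
      qed
      also have "\<dots> \<le> (\<bar>ln (P m)\<bar> + 2) * Bd 1 r"
      proof -
        have "(1 + real r)^2 * beta 1 r \<le> 4 ^ r * beta 1 r"
          by (intro mult_right_mono pow4 beta_nonneg) auto
        also have "\<dots> \<le> Bd 1 r" by (intro beta_le_Bd) simp
        finally show ?thesis by (intro mult_left_mono) auto
      qed
      finally show ?thesis .
    qed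
    have "a t r * (Kq * 4 ^ r) \<le> Kq * Bd 1 r"
    proof -
      have "a t r * (Kq * 4 ^ r) = Kq * (4 ^ r * a t r)" by simp
      also have "\<dots> \<le> Kq * (4 ^ r * beta 1 r)"
        using t Kq0 by (intro mult_left_mono a_le_beta) auto
      also have "\<dots> \<le> Kq * Bd 1 r" using Kq0 by (intro mult_left_mono beta_le_Bd) auto
      finally show ?thesis .
    qed
    then have "\<bar>phi t r\<bar> \<le> (\<bar>ln (P m)\<bar> + 2 + Kq) * Bd 1 r"
      using phi_le aq aln by (simp add: algebra_simps)
    then show ?thesis using False by (simp add: M0_def)
  qed
qed

lemma phi_cont0: "continuous_on {0..1} (\<lambda>t. phi t r)"
proof -
  have ca: "continuous_on {0..1} (\<lambda>t. a t r)"
    by (intro continuous_at_imp_continuous_on ballI isCont_a)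
  have c1: "continuous_on {0..1} (\<lambda>t. a t r * ln (a t r))"
    by (rule continuous_on_compose2[OF xlnx_cont ca]) (auto simp: a_nonneg a_le1)
  have c2: "continuous_on {0..1} (\<lambda>t. a t r * ln (q t r))"
  proof (intro continuous_at_imp_continuous_on ballI)
    fix t :: real assume "t \<in> {0..1}"
    then have "q t r \<noteq> 0" using q_pos[of t r] by auto
    then show "isCont (\<lambda>t. a t r * ln (q t r)) t"
      by (intro continuous_intros isCont_a isCont_q)
  qed
  have "continuous_on {0..1} (\<lambda>t. a t r * ln (a t r) - a t r * ln (q t r))"
    by (intro continuous_on_diff c1 c2)
  then show ?thesis by (rule continuous_on_cong[THEN iffD1, rotated 2]) (auto simp: phi_alt)
qed

lemma A_cont0: "(A \<longlongrightarrow> A 0) (at_right 0)"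
proof -
  have ul: "uniform_limit {0..1} (\<lambda>N t. \<Sum>r<N. phi t r) (\<lambda>t. \<Sum>r. phi t r) sequentially"
    by (rule Weierstrass_m_test[OF _ summable_M0]) (use phi_bound0 in auto)
  have "continuous_on {0..1} (\<lambda>t. \<Sum>r. phi t r)"
    by (rule uniform_limit_theorem[OF _ ul])
       (auto intro!: always_eventually continuous_on_sum phi_cont0)
  then have "continuous_on {0..1} A" by (simp add: A_def[abs_def])
  then show ?thesis by (rule continuous_on_Icc_at_rightD) simp
qed

end

lemma gibbs_term: "0 \<le> x \<Longrightarrow> 0 < y \<Longrightarrow> x - y \<le> x * ln (x / (y::real))"
proof (cases "x = 0")
  case False
  assume x: "0 \<le> x" and y: "0 < y"
  then have xp: "0 < x" using False by simp
  have "ln (y / x) \<le> y / x - 1" using xp y by (intro ln_le_minus_one) auto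
  moreover have "ln (x / y) = - ln (y / x)" using xp y by (simp add: ln_div)
  ultimately have "1 - y / x \<le> ln (x / y)" by simp
  then have "x * (1 - y / x) \<le> x * ln (x / y)" using xp by (intro mult_left_mono) auto
  moreover have "x * (1 - y / x) = x - y" using xp by (simp add: field_simps)
  ultimately show ?thesis by simp
qed simp

lemma fact_add_le: "fact (j + k) \<le> fact j * (real (j + k)) ^ k"
proof (induction k)
  case (Suc k)
  have "fact (j + Suc k) = real (Suc (j + k)) * fact (j + k)" by simp
  also have "\<dots> \<le> real (Suc (j + k)) * (fact j * real (j + k) ^ k)"
    using Suc by (intro mult_left_mono) auto
  also have "\<dots> \<le> real (Suc (j + k)) * (fact j * real (j + Suc k) ^ k)"
    by (intro mult_left_mono power_mono) auto
  also have "\<dots> = fact j * real (j + Suc k) ^ Suc k" by simp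
  finally show ?case .
qed simp

lemma logsum:
  fixes c x :: "'i \<Rightarrow> real"
  assumes I: "finite I" and c: "\<And>i. i \<in> I \<Longrightarrow> 0 \<le> c i" and c1: "sum c I = 1"
    and x: "\<And>i. i \<in> I \<Longrightarrow> 0 \<le> x i" and Q: "0 < Q"
  shows "(\<Sum>i\<in>I. c i * x i) * ln ((\<Sum>i\<in>I. c i * x i) / Q) \<le> (\<Sum>i\<in>I. c i * (x i * ln (x i / Q)))"
proof -
  define s where "s = (\<Sum>i\<in>I. c i * x i)"
  have s0: "0 \<le> s" unfolding s_def using c x by (intro sum_nonneg mult_nonneg_nonneg) auto
  show ?thesis
  proof (cases "s = 0")
    case True
    then have "\<forall>i\<in>I. c i * x i = 0" unfolding s_def using I c x
      by (subst (asm) sum_nonneg_eq_0_iff) (auto intro: mult_nonneg_nonneg)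
    then have "(\<Sum>i\<in>I. c i * (x i * ln (x i / Q))) = 0"
      by (intro sum.neutral) (auto simp: mult.assoc[symmetric])
    then show ?thesis using True by (simp add: s_def[symmetric])
  next
    case False
    then have sp: "0 < s" using s0 by simp
    have trm: "c i * (x i - s) \<le> c i * (x i * ln (x i / Q)) - c i * x i * ln (s / Q)" if i: "i \<in> I" for i
    proof (cases "x i = 0")
      case True
      then show ?thesis using c[OF i] sp by simp
    next
      case False
      then have xp: "0 < x i" using x[OF i] by simp
      have "x i - s \<le> x i * ln (x i / s)" by (rule gibbs_term) (use xp sp in auto)
      also have "ln (x i / s) = ln (x i / Q) - ln (s / Q)" using xp sp Q by (simp add: ln_div)
      finally have "x i - s \<le> x i * ln (x i / Q) - x i * ln (s / Q)" by (simp add: algebra_simps)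
      then have "c i * (x i - s) \<le> c i * (x i * ln (x i / Q) - x i * ln (s / Q))"
        using c[OF i] by (intro mult_left_mono) auto
      then show ?thesis by (simp add: algebra_simps)
    qed
    have "(\<Sum>i\<in>I. c i * (x i - s)) \<le> (\<Sum>i\<in>I. c i * (x i * ln (x i / Q)) - c i * x i * ln (s / Q))"
      by (intro sum_mono trm)
    moreover have "(\<Sum>i\<in>I. c i * (x i - s)) = 0"
      using c1 by (simp add: algebra_simps sum_subtractf sum_distrib_right[symmetric] s_def)
    moreover have "(\<Sum>i\<in>I. c i * (x i * ln (x i / Q)) - c i * x i * ln (s / Q)) =
        (\<Sum>i\<in>I. c i * (x i * ln (x i / Q))) - s * ln (s / Q)"
      by (simp add: sum_subtractf sum_distrib_right[symmetric] s_def)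
    ultimately show ?thesis unfolding s_def[symmetric] by simp
  qed
qed

lemma w_affine_sums: "(\<lambda>j. w t j * (C0 + C1 * real j)) sums (C0 * 1 + C1 * t)"
proof -
  have "(\<lambda>j. C0 * w t j + C1 * (real j * w t j)) sums (C0 * 1 + C1 * t)"
    by (intro sums_add sums_mult w_sums w_sums1)
  then show ?thesis by (simp add: algebra_simps)
qed

lemma alg2: "T + K \<noteq> (0::real) \<Longrightarrow> lam + J * (lt - ls) - K * ls + K * (lk + (J + K) / (T + K) - 1) =
   (lam - K * ls + K * lk + K * K / (T + K) - K) + ((lt - ls) + K / (T + K)) * J"
  by (simp add: divide_inverse algebra_simps)

context ent
begin

lemma q_sums: "0 \<le> t \<Longrightarrow> (\<lambda>r. q t r) sums 1"
  unfolding q_def by (rule w_sums)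

lemma summable_phi: "0 \<le> t \<Longrightarrow> summable (\<lambda>r. phi t r)"
proof (cases "t = 0")
  case True
  have "\<And>r. norm (\<bar>phi 0 r\<bar>) \<le> M0 r" using phi_bound0[of 0] by simp
  then have "summable (\<lambda>r. \<bar>phi 0 r\<bar>)"
    by (rule summable_comparison_test'[OF summable_M0])
  then show ?thesis using True by (simp add: summable_rabs_cancel)
next
  case False
  assume "0 \<le> t"
  then have t: "0 < t" using False by simp
  show ?thesis using phi_bound[of t t t] t by (intro summable_bound') auto
qed

lemma A_nonneg: "0 \<le> t \<Longrightarrow> 0 \<le> A t"
proof -
  assume t: "0 \<le> t"
  have "(\<lambda>r. a t r - q t r) sums (1 - 1)" by (intro sums_diff a_sums q_sums t)
  moreover have "(\<lambda>r. phi t r) sums A t" unfolding A_def by (intro summable_sums summable_phi t)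
  moreover have "a t r - q t r \<le> phi t r" for r
    unfolding phi_def U_def by (intro gibbs_term a_nonneg q_pos t)
  ultimately have "1 - 1 \<le> A t" by (rule sums_le[rotated]; auto)
  then show ?thesis by simp
qed

lemma Qt_sums: "0 < t \<Longrightarrow> (\<lambda>r. Qt t r) sums 1"
proof -
  assume t: "0 < t"
  have "(\<lambda>r. real (Suc r) * a t (Suc r)) sums (lam + t)"
    using a_sums1[of t] by (subst sums_Suc_iff) simp
  then have "(\<lambda>r. real (Suc r) * a t (Suc r) / (lam + t)) sums ((lam + t) / (lam + t))"
    by (rule sums_divide)
  then show ?thesis using lam_pos t by (simp add: Qt_def)
qed

lemma G_nonneg: "0 < t \<Longrightarrow> 0 \<le> G t"
proof -
  assume t: "0 < t"
  have s1: "(\<lambda>r. a t r - Qt t r) sums (1 - 1)" by (intro sums_diff a_sums Qt_sums t)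
  have s2: "(\<lambda>r. psi t r) sums G t" unfolding G_def
    using psi_summable[OF t] by (simp add: summable_rabs_cancel summable_sums)
  have le: "a t r - Qt t r \<le> psi t r" for r
  proof (cases "r < m")
    case True
    then have a0: "a t r = 0" by (simp add: a_zero)
    have "0 \<le> a t (r + 1)" using t by (simp add: a_nonneg)
    then have "0 \<le> Qt t r" unfolding Qt_def using t lam_pos by simp
    then show ?thesis using a0 by (simp add: psi_def)
  next
    case False
    have "0 < a t (r + 1)" using a_pos[OF t] False by simp
    then have "0 < Qt t r" unfolding Qt_def using t lam_pos by simp
    moreover have "0 \<le> a t r" using t by (simp add: a_nonneg)
    ultimately show ?thesis unfolding psi_def by (rule gibbs_term[rotated])
  qed
  have "1 - 1 \<le> G t" by (rule sums_le[OF le s1 s2])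
  then show ?thesis by simp
qed

definition UB :: "real \<Rightarrow> real" where
  "UB t = lam + t * ln (t / (lam + t)) + (\<Sum>k\<le>n. P k * real k * (ln (t + real k) - ln (lam + t)))"

lemma w_ratio_bound:
  assumes t: "0 < t"
  shows "ln (w t j / q t (j + k)) \<le>
    (lam - real k * ln (lam + t) + real k * ln (t + real k) + real k * real k / (t + real k) - real k)
    + (ln (t / (lam + t)) + real k / (t + real k)) * real j"
proof -
  define s where "s = lam + t"
  have s: "0 < s" using t lam_pos by (simp add: s_def)
  have wp: "0 < w t j" "0 < q t (j + k)" using w_pos q_pos t by auto
  have "ln (w t j / q t (j + k)) = ln (w t j) - ln (w s (j + k))"
    using wp by (simp add: ln_div q_def s_def)
  also have "\<dots> = lam + real j * (ln t - ln s) - real k * ln s + (ln (fact (j + k)) - ln (fact j))"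
    using t s by (simp add: ln_w s_def algebra_simps)
  also have "ln (fact (j + k)) - ln (fact j) \<le> real k * (ln (t + real k) + real (j + k) / (t + real k) - 1)"
  proof (cases "k = 0")
    case False
    have jk: "0 < real (j + k)" using False by simp
    have "ln (fact (j + k)) \<le> ln (fact j * real (j + k) ^ k)"
      using fact_add_le[of j k] jk by (subst ln_le_cancel_iff) auto
    also have "\<dots> = ln (fact j) + real k * ln (real (j + k))"
      using jk by (simp add: ln_mult ln_realpow)
    finally have "ln (fact (j + k)) - ln (fact j) \<le> real k * ln (real (j + k))" by simp
    also have "ln (real (j + k)) \<le> ln (t + real k) + real (j + k) / (t + real k) - 1"
    proof -
      have tk: "0 < t + real k" using t by simp
      have "ln (real (j + k) / (t + real k)) \<le> real (j + k) / (t + real k) - 1"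
        using jk tk by (intro ln_le_minus_one) auto
      then show ?thesis using jk tk by (simp add: ln_div)
    qed
    then have "real k * ln (real (j + k)) \<le> real k * (ln (t + real k) + real (j + k) / (t + real k) - 1)"
      by (intro mult_left_mono) auto
    finally show ?thesis .
  qed simp
  finally have "ln (w t j / q t (j + k)) \<le> lam + real j * (ln t - ln s) - real k * ln s +
     real k * (ln (t + real k) + (real j + real k) / (t + real k) - 1)" by simp
  also have "\<dots> = (lam - real k * ln s + real k * ln (t + real k) + real k * real k / (t + real k) - real k)
     + ((ln t - ln s) + real k / (t + real k)) * real j"
    by (rule alg2) (use t in simp)
  also have "ln t - ln s = ln (t / (lam + t))" using t s by (simp add: ln_div s_def)
  finally show ?thesis by (simp add: s_def)
qed

lemma phi_le_UB_terms:
  assumes t: "0 < t"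
  shows "phi t r \<le> (\<Sum>k\<le>n. P k * sh k (\<lambda>j. w t j *
    ((lam - real k * ln (lam + t) + real k * ln (t + real k) + real k * real k / (t + real k) - real k)
    + (ln (t / (lam + t)) + real k / (t + real k)) * real j)) r)"
proof -
  have "phi t r \<le> (\<Sum>k\<le>n. P k * (sh k (w t) r * ln (sh k (w t) r / q t r)))"
    unfolding phi_def U_def a_def
    by (rule logsum) (use P_nonneg P_sum q_pos t w_nonneg in \<open>auto simp: sh_def\<close>)
  also have "\<dots> \<le> (\<Sum>k\<le>n. P k * sh k (\<lambda>j. w t j *
    ((lam - real k * ln (lam + t) + real k * ln (t + real k) + real k * real k / (t + real k) - real k)
    + (ln (t / (lam + t)) + real k / (t + real k)) * real j)) r)"
  proof (intro sum_mono mult_left_mono P_nonneg)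
    fix k
    show "sh k (w t) r * ln (sh k (w t) r / q t r) \<le> sh k (\<lambda>j. w t j *
      ((lam - real k * ln (lam + t) + real k * ln (t + real k) + real k * real k / (t + real k) - real k)
      + (ln (t / (lam + t)) + real k / (t + real k)) * real j)) r"
    proof (cases "k \<le> r")
      case True
      then have rr: "r = (r - k) + k" by simp
      have "ln (w t (r - k) / q t r) \<le>
        (lam - real k * ln (lam + t) + real k * ln (t + real k) + real k * real k / (t + real k) - real k)
        + (ln (t / (lam + t)) + real k / (t + real k)) * real (r - k)"
        using w_ratio_bound[OF t, of "r - k" k] rr by simp
      then show ?thesis using True w_pos[OF t, of "r - k"] by (simp add: sh_def mult_left_mono)
    qed (simp add: sh_def)
  qed
  finally show ?thesis .
qed

lemma UB_sums:
  assumes t: "0 < t"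
  shows "(\<lambda>r. \<Sum>k\<le>n. P k * sh k (\<lambda>j. w t j *
    ((lam - real k * ln (lam + t) + real k * ln (t + real k) + real k * real k / (t + real k) - real k)
    + (ln (t / (lam + t)) + real k / (t + real k)) * real j)) r) sums UB t"
proof -
  have "(\<lambda>r. \<Sum>k\<le>n. P k * sh k (\<lambda>j. w t j *
    ((lam - real k * ln (lam + t) + real k * ln (t + real k) + real k * real k / (t + real k) - real k)
    + (ln (t / (lam + t)) + real k / (t + real k)) * real j)) r) sums
    (\<Sum>k\<le>n. P k * ((lam - real k * ln (lam + t) + real k * ln (t + real k) + real k * real k / (t + real k) - real k) * 1
    + (ln (t / (lam + t)) + real k / (t + real k)) * t))"
  proof (intro sums_sum sums_mult sh_sums)
    fix k
    show "(\<lambda>j. w t j *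
      ((lam - real k * ln (lam + t) + real k * ln (t + real k) + real k * real k / (t + real k) - real k)
      + (ln (t / (lam + t)) + real k / (t + real k)) * real j)) sums
      ((lam - real k * ln (lam + t) + real k * ln (t + real k) + real k * real k / (t + real k) - real k) * 1
      + (ln (t / (lam + t)) + real k / (t + real k)) * t)"
      by (rule w_affine_sums)
  qed
  moreover have "(\<Sum>k\<le>n. P k * ((lam - real k * ln (lam + t) + real k * ln (t + real k) + real k * real k / (t + real k) - real k) * 1
    + (ln (t / (lam + t)) + real k / (t + real k)) * t)) = UB t"
  proof -
    have "P k * ((lam - real k * ln (lam + t) + real k * ln (t + real k) + real k * real k / (t + real k) - real k) * 1
      + (ln (t / (lam + t)) + real k / (t + real k)) * t) =
      lam * P k + t * ln (t / (lam + t)) * P k + P k * real k * (ln (t + real k) - ln (lam + t))" for k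
    proof -
      have tk: "t + real k \<noteq> 0" using t by simp
      have "real k * real k / (t + real k) - real k + real k / (t + real k) * t = 0"
        using tk by (simp add: field_simps)
      then show ?thesis by (simp add: algebra_simps)
    qed
    then show ?thesis
      by (simp add: UB_def sum.distrib sum_distrib_left[symmetric] sum_distrib_right[symmetric] P_sum)
  qed
  ultimately show ?thesis by simp
qed

lemma A_le_UB: "0 < t \<Longrightarrow> A t \<le> UB t"
  by (rule sums_le[OF phi_le_UB_terms _ UB_sums]) (auto simp: A_def intro!: summable_sums summable_phi)

lemma UB_lim: "(UB \<longlongrightarrow> 0) at_top"
proof -
  have inf: "filterlim (\<lambda>t. lam + t) at_infinity at_top"
    by (intro filterlim_at_top_imp_at_infinity filterlim_tendsto_add_at_top[OF tendsto_const] filterlim_ident)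
  have frac: "((\<lambda>t. c / (lam + t)) \<longlongrightarrow> 0) at_top" for c
    by (rule tendsto_divide_0[OF tendsto_const inf])
  have l1: "((\<lambda>t. t * ln (t / (lam + t))) \<longlongrightarrow> - lam) at_top"
  proof (rule tendsto_sandwich)
    show "\<forall>\<^sub>F t in at_top. - lam \<le> t * ln (t / (lam + t))"
      using eventually_gt_at_top[of 0]
    proof eventually_elim
      case (elim t)
      have "ln ((lam + t) / t) \<le> (lam + t) / t - 1" using elim lam_pos by (intro ln_le_minus_one) auto
      moreover have "ln (t / (lam + t)) = - ln ((lam + t) / t)" using elim lam_pos by (simp add: ln_div)
      ultimately have "- lam / t \<le> ln (t / (lam + t))" using elim by (simp add: field_simps)
      then have "t * (- lam / t) \<le> t * ln (t / (lam + t))" using elim by (intro mult_left_mono) auto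
      then show ?case using elim by simp
    qed
    show "\<forall>\<^sub>F t in at_top. t * ln (t / (lam + t)) \<le> - lam + lam * lam / (lam + t)"
      using eventually_gt_at_top[of 0]
    proof eventually_elim
      case (elim t)
      have "ln (t / (lam + t)) \<le> t / (lam + t) - 1" using elim lam_pos by (intro ln_le_minus_one) auto
      then have "t * ln (t / (lam + t)) \<le> t * (t / (lam + t) - 1)" using elim by (intro mult_left_mono) auto
      also have "t * (t / (lam + t) - 1) = - lam + lam * lam / (lam + t)"
        using elim lam_pos by (simp add: field_simps)
      finally show ?case .
    qed
    show "((\<lambda>t. - lam) \<longlongrightarrow> - lam) at_top" by simp
    show "((\<lambda>t. - lam + lam * lam / (lam + t)) \<longlongrightarrow> - lam) at_top"
      using tendsto_add[OF tendsto_const frac, of "- lam" "lam * lam"] by simp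
  qed
  have l2: "((\<lambda>t. ln (t + real k) - ln (lam + t)) \<longlongrightarrow> 0) at_top" for k
  proof -
    have "((\<lambda>t. ln (1 + (real k - lam) / (lam + t))) \<longlongrightarrow> ln (1 + 0)) at_top"
      by (intro tendsto_intros frac) auto
    moreover have "\<forall>\<^sub>F t in at_top. ln (1 + (real k - lam) / (lam + t)) = ln (t + real k) - ln (lam + t)"
      using eventually_gt_at_top[of 0]
    proof eventually_elim
      case (elim t)
      have "1 + (real k - lam) / (lam + t) = (t + real k) / (lam + t)" using elim lam_pos by (simp add: field_simps)
      then show ?case using elim lam_pos by (simp add: ln_div)
    qed
    ultimately show ?thesis by (simp add: tendsto_cong)
  qed
  have "((\<lambda>t. lam + t * ln (t / (lam + t)) + (\<Sum>k\<le>n. P k * real k * (ln (t + real k) - ln (lam + t))))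
     \<longlongrightarrow> lam + - lam + (\<Sum>k\<le>n. P k * real k * 0)) at_top"
    by (intro tendsto_intros l1 l2)
  then show ?thesis by (simp add: UB_def[abs_def])
qed

lemma A_lim: "(A \<longlongrightarrow> 0) at_top"
proof (rule tendsto_sandwich[OF _ _ tendsto_const UB_lim])
  show "\<forall>\<^sub>F t in at_top. 0 \<le> A t"
    using eventually_gt_at_top[of 0] by eventually_elim (simp add: A_nonneg)
  show "\<forall>\<^sub>F t in at_top. A t \<le> UB t"
    using eventually_gt_at_top[of 0] by eventually_elim (simp add: A_le_UB)
qed

end

lemma abs_summable_infsum:
  fixes f :: "nat \<Rightarrow> real"
  assumes "summable (\<lambda>n. \<bar>f n\<bar>)"
  shows "f summable_on UNIV" "infsum f UNIV = suminf f"
proof -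
  have s: "summable (\<lambda>n. norm (f n))" using assms by simp
  show "f summable_on UNIV" by (rule norm_summable_imp_summable_on[OF s])
  have "(f has_sum suminf f) UNIV"
    by (rule norm_summable_imp_has_sum[OF s]) (use s summable_norm_cancel in \<open>blast intro: summable_sums\<close>)
  then show "infsum f UNIV = suminf f" by (rule infsumI)
qed

context ent
begin

lemma integral_A:
  "(\<integral>\<^sup>+x. ennreal (indicator {0<..} x * G x) * indicator {0..} x \<partial>lborel) = ennreal (A 0)"
proof -
  define f where "f x = indicator {0<..} x * G x" for x :: real
  have f_meas: "f \<in> borel_measurable borel"
    using borel_measurable_continuous_on_indicator[of "{0<..}" G] G_cont
    by (simp add: f_def[abs_def])
  have f_nonneg: "0 \<le> f x" for x by (simp add: f_def G_nonneg indicator_def)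
  have int_e: "(\<integral>\<^sup>+x. ennreal (f x) * indicator {e..} x \<partial>lborel) = ennreal (A e)" if e: "0 < e" for e
  proof -
    have "(\<integral>\<^sup>+x. ennreal (f x) * indicator {e..} x \<partial>lborel) = ennreal (0 - (- A e))"
    proof (rule nn_integral_FTC_atLeast[OF f_meas])
      show "\<And>x. e \<le> x \<Longrightarrow> ((\<lambda>x. - A x) has_real_derivative f x) (at x)"
      proof -
        fix x assume "e \<le> x"
        then have x: "0 < x" using e by simp
        show "((\<lambda>x. - A x) has_real_derivative f x) (at x)"
          using DERIV_minus[OF A_deriv[OF x]] x by (simp add: f_def)
      qed
      show "\<And>x. e \<le> x \<Longrightarrow> 0 \<le> f x" using f_nonneg by simp
      show "((\<lambda>x. - A x) \<longlongrightarrow> 0) at_top" using tendsto_minus[OF A_lim] by simp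
    qed
    then show ?thesis by simp
  qed
  define g where "g k x = ennreal (f x) * indicator {inverse (real (Suc k))..} x" for k x
  have "(\<lambda>k. integral\<^sup>N lborel (g k)) \<longlonglongrightarrow> (\<integral>\<^sup>+x. ennreal (f x) * indicator {0..} x \<partial>lborel)"
  proof (rule nn_integral_LIMSEQ)
    show "incseq g"
    proof (rule incseq_SucI, rule le_funI)
      fix k x
      have "inverse (real (Suc (Suc k))) \<le> inverse (real (Suc k))" by (simp add: field_simps)
      then have sub: "{inverse (real (Suc k))..} \<subseteq> {inverse (real (Suc (Suc k)))..}" by auto
      then have "indicator {inverse (real (Suc k))..} x \<le> (indicator {inverse (real (Suc (Suc k)))..} x :: ennreal)"
      proof (cases "x \<in> {inverse (real (Suc k))..}")
        case True
        have "x \<in> {inverse (real (Suc (Suc k)))..}" by (rule subsetD[OF sub True])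
        then show ?thesis using True by (simp add: indicator_def)
      next
        case False
        then show ?thesis by (simp add: indicator_def)
      qed
      then show "g k x \<le> g (Suc k) x" unfolding g_def
        by (intro mult_left_mono) auto
    qed
    show "\<And>k. g k \<in> borel_measurable lborel"
      unfolding g_def using f_meas by measurable
    fix x :: real
    show "(\<lambda>k. g k x) \<longlonglongrightarrow> ennreal (f x) * indicator {0..} x"
    proof (cases "0 < x")
      case True
      have "\<forall>\<^sub>F k in sequentially. inverse (real (Suc k)) < x"
        using LIMSEQ_inverse_real_of_nat True by (rule order_tendstoD)
      then have "\<forall>\<^sub>F k in sequentially. g k x = ennreal (f x) * indicator {0..} x"
        by eventually_elim (use True in \<open>auto simp: g_def indicator_def\<close>)
      then show ?thesis by (rule tendsto_eventually)
    next
      case False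
      then have "f x = 0" by (simp add: f_def)
      then show ?thesis by (simp add: g_def)
    qed
  qed
  moreover have "(\<lambda>k. integral\<^sup>N lborel (g k)) \<longlonglongrightarrow> ennreal (A 0)"
  proof -
    have "integral\<^sup>N lborel (g k) = ennreal (A (inverse (real (Suc k))))" for k
      unfolding g_def by (rule int_e) simp
    moreover have "filterlim (\<lambda>k. inverse (real (Suc k))) (at_right 0) sequentially"
      by (rule tendsto_imp_filterlim_at_right[OF LIMSEQ_inverse_real_of_nat]) simp
    then have "(\<lambda>k. A (inverse (real (Suc k)))) \<longlonglongrightarrow> A 0"
      by (rule filterlim_compose[OF A_cont0])
    then have "(\<lambda>k. ennreal (A (inverse (real (Suc k))))) \<longlonglongrightarrow> ennreal (A 0)"
      by (rule tendsto_ennrealI)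
    ultimately show ?thesis by simp
  qed
  ultimately show ?thesis unfolding f_def by (rule LIMSEQ_unique)
qed

end


lemma rel_entropy_eq:
  assumes nz: "\<not> (\<exists>x. P x > 0 \<and> Q x = 0)"
    and fe: "\<And>x. (if P x = 0 then 0 else P x * ln (P x / Q x)) = f x"
    and sa: "summable (\<lambda>n. \<bar>f n\<bar>)"
  shows "rel_entropy P Q = ereal (suminf f)"
proof -
  have fe': "(\<lambda>x. if P x = 0 then 0 else P x * ln (P x / Q x)) = f" by (rule ext) (rule fe)
  show ?thesis
    unfolding rel_entropy_def fe' using nz abs_summable_infsum[OF sa] by simp
qed

theorem proposition4:
  fixes n :: nat and p :: "nat \<Rightarrow> real" and lam :: real
  assumes p_range: "\<And>i. i < n \<Longrightarrow> 0 \<le> p i \<and> p i \<le> 1"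
    and lambda_def: "lam = (\<Sum>i<n. p i)"
    and lambda_pos: "lam > 0"
  shows "rel_entropy (pmf (bernoulli_sum_pmf n p)) (pmf (Po lam)) =
         enn2ereal (\<integral>\<^sup>+ t\<in>{0..}.
            e2ennreal (rel_entropy (\<lambda>r. pmf (add_poisson (bernoulli_sum_pmf n p) t) r)
                                   (\<lambda>r. real (r + 1) * pmf (add_poisson (bernoulli_sum_pmf n p) t) (r + 1)
                                          / (lam + t)))
          \<partial>lborel)"
proof -
  define B where "B = bernoulli_sum_pmf n p"
  define P where "P = pmf B"
  have ex: "\<exists>k. 0 < P k"
  proof (rule ccontr)
    assume "\<not> (\<exists>k. 0 < P k)"
    then have "\<And>k. P k = 0" using pmf_nonneg[of B] unfolding P_def by (metis less_eq_real_def)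
    then have "(\<Sum>k\<le>n. P k) = 0" by simp
    moreover have "(\<Sum>k\<le>n. P k) = 1" unfolding P_def B_def by (rule bsum_sum)
    ultimately show False by simp
  qed
  define m where "m = (LEAST k. 0 < P k)"
  interpret E: ent P n m lam
  proof
    show "\<And>k. 0 \<le> P k" by (simp add: P_def)
    show "\<And>k. n < k \<Longrightarrow> P k = 0" by (simp add: P_def B_def bsum_zero)
    show "(\<Sum>k\<le>n. P k) = 1" unfolding P_def B_def by (rule bsum_sum)
    show "(\<Sum>k\<le>n. real k * P k) = lam"
      unfolding P_def B_def lambda_def by (rule bsum_mean[OF p_range])
    show "0 < lam" by (rule lambda_pos)
    show "0 < P m" unfolding m_def using ex by (rule LeastI_ex)
    show "\<And>k. k < m \<Longrightarrow> P k = 0"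
    proof -
      fix k assume "k < m"
      then have "\<not> 0 < P k" unfolding m_def by (rule not_less_Least)
      then show "P k = 0" using pmf_nonneg[of B k] unfolding P_def by linarith
    qed
  qed
  have lhs: "rel_entropy (pmf B) (pmf (Po lam)) = ereal (E.A 0)"
  proof -
    have po: "pmf (Po lam) x = E.q 0 x" for x
      using lambda_pos by (simp add: pmf_Po E.q_def)
    have PB: "pmf B = P" by (simp add: P_def)
    have fe: "(if pmf B x = 0 then 0 else pmf B x * ln (pmf B x / pmf (Po lam) x)) = E.phi 0 x" for x
      unfolding PB by (auto simp: po E.phi_def E.U_def E.a_0)
    have nz: "\<not> (\<exists>x. pmf B x > 0 \<and> pmf (Po lam) x = 0)"
      using E.q_pos[of 0] by (simp add: po) (metis less_irrefl)
    have sa: "summable (\<lambda>r. \<bar>E.phi 0 r\<bar>)"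
    proof (rule summable_comparison_test'[OF E.summable_M0])
      show "\<And>r. norm \<bar>E.phi 0 r\<bar> \<le> E.M0 r" using E.phi_bound0[of 0] by simp
    qed
    show ?thesis unfolding E.A_def by (rule rel_entropy_eq[OF nz fe sa])
  qed
  have pa: "pmf (add_poisson B t) r = E.a t r" if "0 < t" for t r
  proof -
    have "pmf (add_poisson B t) r = (\<Sum>k\<le>n. pmf B k * sh k (w t) r)"
      by (rule pmf_add_poisson) (use that in \<open>auto simp: B_def bsum_zero\<close>)
    then show ?thesis unfolding E.a_def by (simp add: P_def)
  qed
  have re: "rel_entropy (\<lambda>r. pmf (add_poisson B t) r)
              (\<lambda>r. real (r + 1) * pmf (add_poisson B t) (r + 1) / (lam + t)) = ereal (E.G t)"
    if t: "0 < t" for t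
  proof -
    have eq1: "(\<lambda>r. pmf (add_poisson B t) r) = E.a t" using pa[OF t] by (simp add: fun_eq_iff)
    have eq2: "(\<lambda>r. real (r + 1) * pmf (add_poisson B t) (r + 1) / (lam + t)) = E.Qt t"
      using pa[OF t] by (simp add: fun_eq_iff E.Qt_def)
    have nz: "\<not> (\<exists>x. E.a t x > 0 \<and> E.Qt t x = 0)"
    proof
      assume "\<exists>x. E.a t x > 0 \<and> E.Qt t x = 0"
      then obtain x where x: "E.a t x > 0" "E.Qt t x = 0" by blast
      then have "m \<le> x" using E.a_zero[of x t] by (metis less_irrefl not_le)
      then have "0 < E.a t (x + 1)" using E.a_pos[OF t] by simp
      then have "0 < E.Qt t x" unfolding E.Qt_def using t lambda_pos by simp
      then show False using x by simp
    qed
    have "rel_entropy (E.a t) (E.Qt t) = ereal (suminf (E.psi t))"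
      by (rule rel_entropy_eq[OF nz _ E.psi_summable[OF t]]) (simp add: E.psi_def)
    then show ?thesis unfolding eq1 E.Qt_def E.G_def by simp
  qed
  have "(\<integral>\<^sup>+ t. e2ennreal (rel_entropy (\<lambda>r. pmf (add_poisson B t) r)
              (\<lambda>r. real (r + 1) * pmf (add_poisson B t) (r + 1) / (lam + t))) * indicator {0..} t \<partial>lborel)
      = (\<integral>\<^sup>+x. ennreal (indicator {0<..} x * E.G x) * indicator {0..} x \<partial>lborel)"
  proof (rule nn_integral_cong_AE)
    show "AE x in lborel. e2ennreal (rel_entropy (\<lambda>r. pmf (add_poisson B x) r)
              (\<lambda>r. real (r + 1) * pmf (add_poisson B x) (r + 1) / (lam + x))) * indicator {0..} x
          = ennreal (indicator {0<..} x * E.G x) * indicator {0..} x"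
      using AE_lborel_singleton[of 0]
    proof eventually_elim
      case (elim x)
      show ?case
      proof (cases "0 < x")
        case True
        then show ?thesis using re[OF True] by simp
      next
        case False
        then have "x < 0" using elim by simp
        then show ?thesis by simp
      qed
    qed
  qed
  also have "\<dots> = ennreal (E.A 0)" by (rule E.integral_A)
  finally have rhs: "(\<integral>\<^sup>+ t. e2ennreal (rel_entropy (\<lambda>r. pmf (add_poisson B t) r)
              (\<lambda>r. real (r + 1) * pmf (add_poisson B t) (r + 1) / (lam + t))) * indicator {0..} t \<partial>lborel)
      = ennreal (E.A 0)" .
  show ?thesis unfolding B_def[symmetric] lhs rhs using E.A_nonneg[of 0] by simp
qed


end
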